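(* Let $G$ be a compact graph in $\mathbb{R}^d$, $C$ a finite $\epsilon$-sample of $G$, $k\ge1$, and suppose $\psi:\mathrm{DS}_k(G)\to\mathrm{DS}_k(C)$ is a bijection of multisets with $\|q-\psi(q)\|_\infty\le\epsilon$ for all $q\in\mathrm{DS}_k(G)$. If $|\mathrm{vgap}_{k,l}(G)|-|\mathrm{vgap}_{k,l+1}(G)|>4\epsilon$ for some $l\ge1$, then $\psi$ restricts to a bijection $\mathrm{VS}_{k,l}(G)\to\mathrm{VS}_{k,l}(C)$.
   Context: Offsets $X^\alpha$: union of closed radius-$\alpha$ balls centred at points of $X$. $C$ is an $\epsilon$-sample of $G$ if $C\subseteq G^\epsilon$ and $G\subseteq C^\epsilon$. $\mathrm{PD}\{X^\alpha\}$: 1-dimensional $\mathbb{Z}_2$ persistence diagram of $\{X^\alpha\}$, dots $(x,y)=$(birth, death) with multiplicity; off-diagonal part finite. Diagonal gaps: with $0<a_1<\dots<a_n$ the distinct values of $y-x$ over off-diagonal dots and $a_0=0$, gaps are $\{a_{j-1}<y-x<a_j\}$, ranked by width with lower gaps winning ties; $\mathrm{DS}_k$ is the multiset of dots above the lowest of the $k$ widest gaps. Vertical gaps of $\mathrm{DS}_k$: with $c_1<\dots<c_r$ the distinct birth coordinates of dots in $\mathrm{DS}_k$, vertical gaps are $\{c_j<x<c_{j+1}\}$ of width $c_{j+1}-c_j$ and $\{x>c_r\}$ of width $+\infty$; ranked by width with the leftmost winning ties; $\mathrm{vgap}_{k,l}$ is the $l$-th widest (width $0$ if it does not exist). $\mathrm{VS}_{k,l}$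 is the multiset of dots of $\mathrm{DS}_k$ with $x\le a$, where $\{a<x<b\}$ is the leftmost of $\mathrm{vgap}_{k,1},\dots,\mathrm{vgap}_{k,l}$. Notation with argument $X$ refers to $\mathrm{PD}\{X^\alpha\}$; $\|\cdot\|_\infty$ is the max-coordinate distance on $\mathbb{R}^2$. *)

theory Defs
  imports "HOL-Analysis.Analysis" "HOL-Homology.Homology" "HOL-Library.Multiset"
          "HOL-Library.Extended_Real"
begin

definition offset :: "'a::euclidean_space set \<Rightarrow> real \<Rightarrow> 'a set" where
  "offset X \<alpha> = (\<Union>x\<in>X. cball x \<alpha>)"

definition eps_sample :: "'a::euclidean_space set \<Rightarrow> 'a set \<Rightarrow> real \<Rightarrow> bool" where
  "eps_sample C G \<epsilon> \<longleftrightarrow> C \<subseteq> offset G \<epsilon> \<and> G \<subseteq> offset C \<epsilon>"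

definition compact_graph :: "'a::euclidean_space set \<Rightarrow> bool" where
  "compact_graph G \<longleftrightarrow> (\<exists>V E. finite V \<and> finite E \<and>
     (\<forall>g\<in>E. arc g \<and> pathstart g \<in> V \<and> pathfinish g \<in> V \<and>
              path_image g \<inter> V = {pathstart g, pathfinish g}) \<and>
     (\<forall>g\<in>E. \<forall>h\<in>E. g \<noteq> h \<longrightarrow> path_image g \<inter> path_image h \<subseteq> V) \<and>
     G = V \<union> \<Union>(path_image ` E))"

text \<open>A Z_2 chain of p-simplices is a finite set of singular p-simplices; addition
  is symmetric difference.\<close>
definition z2_sum :: "'b set set \<Rightarrow> 'b set" where
  "z2_sum F = {s. odd (card {c\<in>F. s \<in> c})}"

definition z2_boundary :: "nat \<Rightarrow> ((nat \<Rightarrow> real) \<Rightarrow> 'a) set \<Rightarrow> ((nat \<Rightarrow> real) \<Rightarrow> 'a) set" where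
  "z2_boundary p c =
     {f. odd (card {(\<sigma>, i). \<sigma> \<in> c \<and> i \<le> p \<and> singular_face p i \<sigma> = f})}"

definition z2_cycles1 :: "'a topology \<Rightarrow> ((nat \<Rightarrow> real) \<Rightarrow> 'a) set set" where
  "z2_cycles1 X = {c. finite c \<and> c \<subseteq> singular_simplex_set 1 X \<and> z2_boundary 1 c = {}}"

definition z2_boundaries1 :: "'a topology \<Rightarrow> ((nat \<Rightarrow> real) \<Rightarrow> 'a) set set" where
  "z2_boundaries1 X = {z2_boundary 2 c | c. finite c \<and> c \<subseteq> singular_simplex_set 2 X}"

text \<open>Rank of the map H_1(S;Z_2) \<rightarrow> H_1(T;Z_2) induced by inclusion S \<subseteq> T:
  the maximal number of 1-cycles of S that are linearly independent modulo
  the 1-boundaries of T.\<close>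
definition h1_rank :: "'a::euclidean_space set \<Rightarrow> 'a set \<Rightarrow> enat" where
  "h1_rank S T = Sup {enat (card F) | F. finite F \<and> F \<subseteq> z2_cycles1 (top_of_set S) \<and>
       (\<forall>F'\<subseteq>F. F' \<noteq> {} \<longrightarrow> z2_sum F' \<notin> z2_boundaries1 (top_of_set T))}"

definition pers_rank :: "'a::euclidean_space set \<Rightarrow> real \<Rightarrow> real \<Rightarrow> int" where
  "pers_rank X a b = int (the_enat (h1_rank (offset X a) (offset X b)))"

text \<open>Multiplicity of the dot (x,y), x < y, in the 1-dimensional persistence diagram of
  the offset filtration: the eventual value of the rank-inclusion-exclusion over
  shrinking boxes around (x,y).\<close>
definition pd_mult :: "'a::euclidean_space set \<Rightarrow> real \<times> real \<Rightarrow> nat" where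
  "pd_mult X p = (THE m. eventually (\<lambda>\<delta>.
       pers_rank X (fst p + \<delta>) (snd p - \<delta>) - pers_rank X (fst p - \<delta>) (snd p - \<delta>)
     - pers_rank X (fst p + \<delta>) (snd p + \<delta>) + pers_rank X (fst p - \<delta>) (snd p + \<delta>) = int m)
     (at_right 0))"

definition PD :: "'a::euclidean_space set \<Rightarrow> (real \<times> real) multiset" where
  "PD X = (let P = {p. fst p < snd p \<and> pd_mult X p > 0} in
           if finite P then (\<Sum>p\<in>P. replicate_mset (pd_mult X p) p) else {#})"

definition diag_vals :: "(real \<times> real) multiset \<Rightarrow> real list" where
  "diag_vals D = sorted_list_of_set {snd p - fst p | p. p \<in># D \<and> fst p \<noteq> snd p}"

definition diag_a :: "(real \<times> real) multiset \<Rightarrow> nat \<Rightarrow> real" where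
  "diag_a D j = (if j = 0 then 0 else diag_vals D ! (j - 1))"

definition dgap_width :: "(real \<times> real) multiset \<Rightarrow> nat \<Rightarrow> real" where
  "dgap_width D j = diag_a D j - diag_a D (j - 1)"

definition dgap_beats :: "(real \<times> real) multiset \<Rightarrow> nat \<Rightarrow> nat \<Rightarrow> bool" where
  "dgap_beats D i j \<longleftrightarrow> dgap_width D i > dgap_width D j \<or>
                         (dgap_width D i = dgap_width D j \<and> i < j)"

definition dgap_top :: "(real \<times> real) multiset \<Rightarrow> nat \<Rightarrow> nat set" where
  "dgap_top D k = {j \<in> {1..length (diag_vals D)}.
      card {i \<in> {1..length (diag_vals D)}. dgap_beats D i j} < k}"

definition DS :: "nat \<Rightarrow> (real \<times> real) multiset \<Rightarrow> (real \<times> real) multiset" where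
  "DS k D = (if dgap_top D k = {} then {#}
             else filter_mset (\<lambda>p. snd p - fst p > diag_a D (Min (dgap_top D k) - 1)) D)"

definition births :: "(real \<times> real) multiset \<Rightarrow> real list" where
  "births E = sorted_list_of_set (fst ` set_mset E)"

definition vgap_w :: "(real \<times> real) multiset \<Rightarrow> nat \<Rightarrow> ereal" where
  "vgap_w E j = (if j < length (births E)
                 then ereal (births E ! j - births E ! (j - 1)) else \<infinity>)"

definition vgap_beats :: "(real \<times> real) multiset \<Rightarrow> nat \<Rightarrow> nat \<Rightarrow> bool" where
  "vgap_beats E i j \<longleftrightarrow> vgap_w E i > vgap_w E j \<or> (vgap_w E i = vgap_w E j \<and> i < j)"

text \<open>0-based rank of vertical gap j (gap j is {c_j < x < c_{j+1}}, j = 1..r)\<close>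
definition vgap_pos :: "(real \<times> real) multiset \<Rightarrow> nat \<Rightarrow> nat" where
  "vgap_pos E j = card {i \<in> {1..length (births E)}. vgap_beats E i j}"

text \<open>|vgap_{k,l}(D)|: width of the l-th widest vertical gap of DS_k(D), 0 if none\<close>
definition vgap_width :: "nat \<Rightarrow> nat \<Rightarrow> (real \<times> real) multiset \<Rightarrow> ereal" where
  "vgap_width k l D = (let E = DS k D in
     if \<exists>j\<in>{1..length (births E)}. vgap_pos E j = l - 1
     then vgap_w E (THE j. j \<in> {1..length (births E)} \<and> vgap_pos E j = l - 1) else 0)"

definition vgap_top :: "(real \<times> real) multiset \<Rightarrow> nat \<Rightarrow> nat set" where
  "vgap_top E l = {j \<in> {1..length (births E)}. vgap_pos E j < l}"

definition VS :: "nat \<Rightarrow> nat \<Rightarrow> (real \<times> real) multiset \<Rightarrow> (real \<times> real) multiset" where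
  "VS k l D = (let E = DS k D in
     if vgap_top E l = {} then {#}
     else filter_mset (\<lambda>p. fst p \<le> births E ! (Min (vgap_top E l) - 1)) E)"

definition dist_inf :: "real \<times> real \<Rightarrow> real \<times> real \<Rightarrow> real" where
  "dist_inf p q = max \<bar>fst p - fst q\<bar> \<bar>snd p - snd q\<bar>"

end

theory Submission
  imports Defs
begin


definition Lset :: "real set \<Rightarrow> real \<Rightarrow> real set" where
  "Lset S \<tau> = {c\<in>S. \<forall>x\<in>S. c < x \<longrightarrow> c + \<tau> < x}"

lemma Lset_uniq:
  assumes "c1 \<in> Lset S \<tau>" "c2 \<in> Lset S \<tau>" "\<bar>c1 - c2\<bar> \<le> 2*e" "2*e \<le> \<tau>"
  shows "c1 = c2"
proof (rule ccontr)
  assume "c1 \<noteq> c2"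
  then consider "c1 < c2" | "c2 < c1" by linarith
  then show False
  proof cases
    case 1 then have "c1 + \<tau> < c2" using assms(1,2) unfolding Lset_def by auto
    then show False using assms 1 by linarith
  next
    case 2 then have "c2 + \<tau> < c1" using assms(1,2) unfolding Lset_def by auto
    then show False using assms 2 by linarith
  qed
qed

lemma Lset_exA:
  assumes fin: "finite SB"
    and pAB: "\<forall>a\<in>SA. \<exists>b\<in>SB. \<bar>a - b\<bar> \<le> e"
    and pBA: "\<forall>b\<in>SB. \<exists>a\<in>SA. \<bar>a - b\<bar> \<le> e"
    and G: "\<forall>c. c \<in> Lset SA (\<tau> - 2*e) \<longrightarrow> c \<in> Lset SA (\<tau> + 2*e)"
    and e: "0 \<le> e"
    and c: "c \<in> Lset SA \<tau>"
  shows "\<exists>d\<in>Lset SB \<tau>. \<bar>c - d\<bar> \<le> e"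
proof -
  have cS: "c \<in> SA" using c unfolding Lset_def by auto
  have cL: "c \<in> Lset SA (\<tau> - 2*e)" using c e unfolding Lset_def by force
  then have cL2: "c \<in> Lset SA (\<tau> + 2*e)" using G by auto
  define D where "D = {b\<in>SB. b \<le> c + e}"
  obtain b0 where b0: "b0 \<in> SB" "\<bar>c - b0\<bar> \<le> e" using pAB cS by blast
  have Dfin: "finite D" using fin unfolding D_def by auto
  have b0D: "b0 \<in> D" using b0 unfolding D_def by auto
  define d where "d = Max D"
  have dD: "d \<in> D" unfolding d_def using Dfin b0D Max_in by blast
  have dge: "b0 \<le> d" unfolding d_def using Dfin b0D by auto
  have dmax: "\<And>b. b \<in> SB \<Longrightarrow> b \<le> c + e \<Longrightarrow> b \<le> d"
    unfolding d_def using Dfin by (auto simp: D_def)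
  have "d \<in> Lset SB \<tau>"
    unfolding Lset_def
  proof (safe)
    show "d \<in> SB" using dD unfolding D_def by auto
  next
    fix x assume x: "x \<in> SB" "d < x"
    show "d + \<tau> < x"
    proof (rule ccontr)
      assume nx: "\<not> d + \<tau> < x"
      have "x > c + e" using dmax x by force
      obtain a where a: "a \<in> SA" "\<bar>a - x\<bar> \<le> e" using pBA x by blast
      have "a > c" using a \<open>x > c + e\<close> by linarith
      then have "c + (\<tau> + 2*e) < a" using cL2 a unfolding Lset_def by auto
      moreover have "d \<le> c + e" using dD unfolding D_def by auto
      ultimately show False using a nx by linarith
    qed
  qed
  moreover have "\<bar>c - d\<bar> \<le> e" using dD dge b0 unfolding D_def by auto
  ultimately show ?thesis by blast
qed

lemma Lset_exB:
  assumes fin: "finite SA"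
    and pAB: "\<forall>a\<in>SA. \<exists>b\<in>SB. \<bar>a - b\<bar> \<le> e"
    and pBA: "\<forall>b\<in>SB. \<exists>a\<in>SA. \<bar>a - b\<bar> \<le> e"
    and G: "\<forall>c. c \<in> Lset SA (\<tau> - 2*e) \<longrightarrow> c \<in> Lset SA (\<tau> + 2*e)"
    and e: "0 \<le> e"
    and d: "d \<in> Lset SB \<tau>"
  shows "\<exists>c\<in>Lset SA \<tau>. \<bar>c - d\<bar> \<le> e"
proof -
  have dS: "d \<in> SB" using d unfolding Lset_def by auto
  define D where "D = {a\<in>SA. a \<le> d + e}"
  obtain a0 where a0: "a0 \<in> SA" "\<bar>a0 - d\<bar> \<le> e" using pBA dS by blast
  have Dfin: "finite D" using fin unfolding D_def by auto
  have a0D: "a0 \<in> D" using a0 unfolding D_def by auto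
  define c where "c = Max D"
  have cD: "c \<in> D" unfolding c_def using Dfin a0D Max_in by blast
  have cge: "a0 \<le> c" unfolding c_def using Dfin a0D by auto
  have cmax: "\<And>a. a \<in> SA \<Longrightarrow> a \<le> d + e \<Longrightarrow> a \<le> c"
    unfolding c_def using Dfin by (auto simp: D_def)
  have "c \<in> Lset SA (\<tau> - 2*e)"
    unfolding Lset_def
  proof (safe)
    show "c \<in> SA" using cD unfolding D_def by auto
  next
    fix x assume x: "x \<in> SA" "c < x"
    show "c + (\<tau> - 2*e) < x"
    proof (rule ccontr)
      assume nx: "\<not> c + (\<tau> - 2*e) < x"
      have "x > d + e" using cmax x by force
      obtain b where b: "b \<in> SB" "\<bar>x - b\<bar> \<le> e" using pAB x by blast
      have "b > d" using b \<open>x > d + e\<close> by linarith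
      then have "d + \<tau> < b" using d b unfolding Lset_def by auto
      moreover have "c \<le> d + e" using cD unfolding D_def by auto
      ultimately show False using b nx by linarith
    qed
  qed
  then have "c \<in> Lset SA (\<tau> + 2*e)" using G by blast
  then have "c \<in> Lset SA \<tau>" using e unfolding Lset_def by force
  moreover have "\<bar>c - d\<bar> \<le> e" using cD cge a0 unfolding D_def by auto
  ultimately show ?thesis by blast
qed

lemma Lset_match:
  assumes finA: "finite SA" and finB: "finite SB"
    and pAB: "\<forall>a\<in>SA. \<exists>b\<in>SB. \<bar>a - b\<bar> \<le> e"
    and pBA: "\<forall>b\<in>SB. \<exists>a\<in>SA. \<bar>a - b\<bar> \<le> e"
    and G: "\<forall>c. c \<in> Lset SA (\<tau> - 2*e) \<longrightarrow> c \<in> Lset SA (\<tau> + 2*e)"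
    and e: "0 \<le> e" and t: "2*e \<le> \<tau>"
  shows "card (Lset SB \<tau>) = card (Lset SA \<tau>)"
    and "Lset SA \<tau> \<noteq> {} \<Longrightarrow> a \<in> SA \<Longrightarrow> b \<in> SB \<Longrightarrow> \<bar>a - b\<bar> \<le> e \<Longrightarrow>
           (a \<le> Min (Lset SA \<tau>) \<longleftrightarrow> b \<le> Min (Lset SB \<tau>))"
proof -
  note exA = Lset_exA[OF finB pAB pBA G e]
  note exB = Lset_exB[OF finA pAB pBA G e]
  have fLA: "finite (Lset SA \<tau>)" using finA unfolding Lset_def by auto
  have fLB: "finite (Lset SB \<tau>)" using finB unfolding Lset_def by auto
  define f where "f c = (SOME d. d \<in> Lset SB \<tau> \<and> \<bar>c - d\<bar> \<le> e)" for c
  define g where "g d = (SOME c. c \<in> Lset SA \<tau> \<and> \<bar>c - d\<bar> \<le> e)" for d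
  have f: "f c \<in> Lset SB \<tau> \<and> \<bar>c - f c\<bar> \<le> e" if "c \<in> Lset SA \<tau>" for c
    unfolding f_def by (rule someI_ex) (use exA[OF that] in blast)
  have g: "g d \<in> Lset SA \<tau> \<and> \<bar>g d - d\<bar> \<le> e" if "d \<in> Lset SB \<tau>" for d
    unfolding g_def by (rule someI_ex) (use exB[OF that] in blast)
  have "inj_on f (Lset SA \<tau>)"
  proof (rule inj_onI)
    fix x y assume xy: "x \<in> Lset SA \<tau>" "y \<in> Lset SA \<tau>" "f x = f y"
    then have "\<bar>x - y\<bar> \<le> 2*e" using f[OF xy(1)] f[OF xy(2)] by linarith
    then show "x = y" using Lset_uniq[OF xy(1,2) _ t] by blast
  qed
  then have c1: "card (Lset SA \<tau>) \<le> card (Lset SB \<tau>)"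
    by (rule card_inj_on_le) (use f fLB in auto)
  have "inj_on g (Lset SB \<tau>)"
  proof (rule inj_onI)
    fix x y assume xy: "x \<in> Lset SB \<tau>" "y \<in> Lset SB \<tau>" "g x = g y"
    then have "\<bar>x - y\<bar> \<le> 2*e" using g[OF xy(1)] g[OF xy(2)] by linarith
    then show "x = y" using Lset_uniq[OF xy(1,2) _ t] by blast
  qed
  then have c2: "card (Lset SB \<tau>) \<le> card (Lset SA \<tau>)"
    by (rule card_inj_on_le) (use g fLA in auto)
  from c1 c2 show "card (Lset SB \<tau>) = card (Lset SA \<tau>)" by linarith
  assume ne: "Lset SA \<tau> \<noteq> {}" and ab: "a \<in> SA" "b \<in> SB" "\<bar>a - b\<bar> \<le> e"
  define \<alpha> where "\<alpha> = Min (Lset SA \<tau>)"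
  have \<alpha>L: "\<alpha> \<in> Lset SA \<tau>" unfolding \<alpha>_def using fLA ne Min_in by blast
  have \<alpha>min: "\<And>x. x \<in> Lset SA \<tau> \<Longrightarrow> \<alpha> \<le> x" unfolding \<alpha>_def using fLA by auto
  have neB: "Lset SB \<tau> \<noteq> {}" using f \<alpha>L by blast
  define \<beta> where "\<beta> = Min (Lset SB \<tau>)"
  have \<beta>L: "\<beta> \<in> Lset SB \<tau>" unfolding \<beta>_def using fLB neB Min_in by blast
  have \<beta>min: "\<And>x. x \<in> Lset SB \<tau> \<Longrightarrow> \<beta> \<le> x" unfolding \<beta>_def using fLB by auto
  have ab\<beta>: "\<bar>\<alpha> - \<beta>\<bar> \<le> e"
  proof -
    obtain b' where b': "b' \<in> Lset SB \<tau>" "\<bar>\<alpha> - b'\<bar> \<le> e" using f[OF \<alpha>L] by blast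
    obtain c where c: "c \<in> Lset SA \<tau>" "\<bar>c - \<beta>\<bar> \<le> e" using g[OF \<beta>L] by blast
    have "\<alpha> \<le> c" using \<alpha>min c by auto
    have "\<beta> \<le> b'" using \<beta>min b' by auto
    have "\<bar>b' - \<beta>\<bar> \<le> 2*e" using \<open>\<alpha> \<le> c\<close> \<open>\<beta> \<le> b'\<close> b' c by linarith
    then have "b' = \<beta>" using Lset_uniq[OF b'(1) \<beta>L _ t] by blast
    then show ?thesis using b' by simp
  qed
  show "a \<le> \<alpha> \<longleftrightarrow> b \<le> \<beta>"
  proof
    assume "a \<le> \<alpha>"
    show "b \<le> \<beta>"
    proof (rule ccontr)
      assume "\<not> b \<le> \<beta>"
      then have "\<beta> + \<tau> < b" using \<beta>L ab unfolding Lset_def by auto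
      then show False using \<open>a \<le> \<alpha>\<close> ab ab\<beta> t by linarith
    qed
  next
    assume "b \<le> \<beta>"
    show "a \<le> \<alpha>"
    proof (rule ccontr)
      assume "\<not> a \<le> \<alpha>"
      then have "\<alpha> + \<tau> < a" using \<alpha>L ab unfolding Lset_def by auto
      then show False using \<open>b \<le> \<beta>\<close> ab ab\<beta> t by linarith
    qed
  qed
qed



definition rank_ok :: "nat set \<Rightarrow> (nat \<Rightarrow> nat \<Rightarrow> bool) \<Rightarrow> bool" where
  "rank_ok I R \<longleftrightarrow> finite I \<and> (\<forall>i. \<not> R i i) \<and> (\<forall>i j k. R i j \<longrightarrow> R j k \<longrightarrow> R i k)
     \<and> (\<forall>i\<in>I. \<forall>j\<in>I. i \<noteq> j \<longrightarrow> R i j \<or> R j i)"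

definition rpos :: "nat set \<Rightarrow> (nat \<Rightarrow> nat \<Rightarrow> bool) \<Rightarrow> nat \<Rightarrow> nat" where
  "rpos I R j = card {i\<in>I. R i j}"

lemma rank_less:
  assumes "rank_ok I R" "R i j" "i \<in> I"
  shows "rpos I R i < rpos I R j"
proof -
  have tr: "\<And>a b c. R a b \<Longrightarrow> R b c \<Longrightarrow> R a c" and irr: "\<And>a. \<not> R a a"
    using assms(1) unfolding rank_ok_def by blast+
  have "{x\<in>I. R x i} \<subseteq> {x\<in>I. R x j}"
  proof
    fix x assume "x \<in> {x\<in>I. R x i}"
    then show "x \<in> {x\<in>I. R x j}" using tr[of x i j] assms(2) by simp
  qed
  moreover have "i \<in> {x\<in>I. R x j}" "i \<notin> {x\<in>I. R x i}" using assms(2,3) irr by auto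
  ultimately have "{x\<in>I. R x i} \<subset> {x\<in>I. R x j}" by blast
  moreover have "finite {x\<in>I. R x j}" using assms unfolding rank_ok_def by auto
  ultimately show ?thesis unfolding rpos_def by (simp add: psubset_card_mono)
qed

lemma rank_lessD:
  assumes "rank_ok I R" "i \<in> I" "j \<in> I" "rpos I R i < rpos I R j"
  shows "R i j"
proof -
  have "i \<noteq> j" using assms(4) by auto
  moreover have "\<forall>i\<in>I. \<forall>j\<in>I. i \<noteq> j \<longrightarrow> R i j \<or> R j i" using assms(1) unfolding rank_ok_def by blast
  ultimately have "R i j \<or> R j i" using assms(2,3) by blast
  moreover have "\<not> R j i"
  proof
    assume "R j i"
    then have "rpos I R j < rpos I R i" by (rule rank_less[OF assms(1) _ assms(3)])
    with assms(4) show False by simp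
  qed
  ultimately show ?thesis by blast
qed

lemma rank_inj:
  assumes "rank_ok I R" shows "inj_on (rpos I R) I"
proof (rule inj_onI)
  fix i j assume ij: "i \<in> I" "j \<in> I" "rpos I R i = rpos I R j"
  show "i = j"
  proof (rule ccontr)
    assume "i \<noteq> j"
    moreover have "\<forall>i\<in>I. \<forall>j\<in>I. i \<noteq> j \<longrightarrow> R i j \<or> R j i" using assms(1) unfolding rank_ok_def by blast
    ultimately have "R i j \<or> R j i" using ij by blast
    then show False using rank_less[OF assms, of i j] rank_less[OF assms, of j i] ij by auto
  qed
qed

lemma rank_range:
  assumes "rank_ok I R" shows "rpos I R ` I = {..<card I}"
proof -
  have fin: "finite I" using assms unfolding rank_ok_def by auto
  have sub: "rpos I R ` I \<subseteq> {..<card I}"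
  proof
    fix x assume "x \<in> rpos I R ` I"
    then obtain j where j: "j \<in> I" "x = rpos I R j" by blast
    have "\<not> R j j" using assms unfolding rank_ok_def by blast
    then have "{i\<in>I. R i j} \<subseteq> I - {j}" by auto
    then have "rpos I R j \<le> card (I - {j})" unfolding rpos_def using fin
      by (simp add: card_mono)
    also have "\<dots> < card I"
    proof -
      have "card (I - {j}) = card I - 1" using j(1) by (rule card_Diff_singleton)
      moreover have "0 < card I" using fin j(1) card_gt_0_iff by blast
      ultimately show ?thesis by simp
    qed
    finally show "x \<in> {..<card I}" using j by simp
  qed
  have "card (rpos I R ` I) = card I" using card_image[OF rank_inj[OF assms]] .
  then show ?thesis using card_subset_eq[OF _ sub] by simp
qed

lemma rank_top_eq:
  assumes ok: "rank_ok I R" and cH: "card {j\<in>I. P j} = l"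
    and up: "\<And>i j. i \<in> I \<Longrightarrow> j \<in> I \<Longrightarrow> R i j \<Longrightarrow> P j \<Longrightarrow> P i"
    and cross: "\<And>i j. i \<in> I \<Longrightarrow> j \<in> I \<Longrightarrow> P i \<Longrightarrow> \<not> P j \<Longrightarrow> R i j"
  shows "{j\<in>I. rpos I R j < l} = {j\<in>I. P j}"
proof -
  have fin: "finite I" using ok unfolding rank_ok_def by auto
  have irr: "\<And>i. \<not> R i i" using ok unfolding rank_ok_def by auto
  show ?thesis
  proof (intro equalityI subsetI)
    fix j assume j: "j \<in> {j\<in>I. rpos I R j < l}"
    show "j \<in> {j\<in>I. P j}"
    proof (rule ccontr)
      assume "j \<notin> {j\<in>I. P j}"
      then have nP: "\<not> P j" using j by simp
      have "{j\<in>I. P j} \<subseteq> {i\<in>I. R i j}"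
      proof
        fix i assume "i \<in> {j\<in>I. P j}"
        then show "i \<in> {i\<in>I. R i j}" using cross[of i j] nP j by simp
      qed
      moreover have "finite {i\<in>I. R i j}" using fin by simp
      ultimately have "card {j\<in>I. P j} \<le> card {i\<in>I. R i j}" by (rule card_mono[rotated])
      then have "l \<le> rpos I R j" unfolding rpos_def using cH by simp
      then show False using j by simp
    qed
  next
    fix j assume j: "j \<in> {j\<in>I. P j}"
    have "{i\<in>I. R i j} \<subseteq> {j\<in>I. P j} - {j}"
    proof
      fix i assume i: "i \<in> {i\<in>I. R i j}"
      then have "P i" using up[of i j] j by simp
      moreover have "i \<noteq> j" using i irr[of j] by auto
      ultimately show "i \<in> {j\<in>I. P j} - {j}" using i by simp
    qed
    then have "rpos I R j \<le> card ({j\<in>I. P j} - {j})" unfolding rpos_def using fin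
      by (simp add: card_mono)
    also have "\<dots> < l"
    proof -
      have fP: "finite {j\<in>I. P j}" using fin by simp
      have "card ({j\<in>I. P j} - {j}) = card {j\<in>I. P j} - 1" using j by (rule card_Diff_singleton)
      moreover have "0 < card {j\<in>I. P j}" using fP j card_gt_0_iff by blast
      ultimately show ?thesis using cH by simp
    qed
    finally show "j \<in> {j\<in>I. rpos I R j < l}" using j by simp
  qed
qed

section \<open>gaps of a sorted list\<close>

lemma sorted_le:
  assumes "sorted_wrt (<) cs" "i \<le> j" "j < length (cs::real list)"
  shows "cs ! i \<le> cs ! j"
proof (cases "i = j")
  case False
  then show ?thesis using sorted_wrt_nth_less[OF assms(1), of i j] assms by auto
qed simp

definition gw :: "real list \<Rightarrow> nat \<Rightarrow> ereal" where
  "gw cs j = (if j < length cs then ereal (cs ! j - cs ! (j - 1)) else \<infinity>)"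

lemma gw_Lset:
  assumes ss: "sorted_wrt (<) cs" and j: "j \<in> {1..length cs}"
  shows "(ereal \<sigma> < gw cs j) \<longleftrightarrow> cs ! (j - 1) \<in> Lset (set cs) \<sigma>"
proof (cases "j < length cs")
  case True
  have mem: "cs ! (j-1) \<in> set cs" using j by auto
  have "(\<sigma> < cs ! j - cs ! (j - 1)) \<longleftrightarrow> (\<forall>x\<in>set cs. cs ! (j-1) < x \<longrightarrow> cs ! (j-1) + \<sigma> < x)"
  proof
    assume a: "\<sigma> < cs ! j - cs ! (j - 1)"
    show "\<forall>x\<in>set cs. cs ! (j-1) < x \<longrightarrow> cs ! (j-1) + \<sigma> < x"
    proof (intro ballI impI)
      fix x assume x: "x \<in> set cs" "cs ! (j-1) < x"
      then obtain i where i: "i < length cs" "x = cs ! i" by (auto simp: in_set_conv_nth)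
      have "j - 1 < i"
      proof (rule ccontr)
        assume "\<not> j - 1 < i"
        then have "i \<le> j - 1" by simp
        then have "cs ! i \<le> cs ! (j-1)" using ss j
          using sorted_le[OF ss, of i "j-1"] True by auto
        then show False using x i by simp
      qed
      then have "j \<le> i" by simp
      then have "cs ! j \<le> cs ! i" using ss i
        using sorted_le[OF ss, of j i] by auto
      then show "cs ! (j-1) + \<sigma> < x" using a i by simp
    qed
  next
    assume "\<forall>x\<in>set cs. cs ! (j-1) < x \<longrightarrow> cs ! (j-1) + \<sigma> < x"
    moreover have "cs ! j \<in> set cs" using True by simp
    moreover have "cs ! (j-1) < cs ! j" using ss True j
      using sorted_wrt_nth_less[OF ss, of "j-1" j] by auto
    ultimately show "\<sigma> < cs ! j - cs ! (j - 1)" by force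
  qed
  then show ?thesis using True mem unfolding gw_def Lset_def by auto
next
  case False
  then have jn: "j = length cs" using j by auto
  have mem: "cs ! (j-1) \<in> set cs" using j by auto
  have "\<not> cs ! (j-1) < x" if xin: "x \<in> set cs" for x
  proof -
    obtain i where i: "i < length cs" "x = cs ! i" using xin by (metis in_set_conv_nth)
    have "i \<le> j - 1" using i jn by simp
    then have "cs ! i \<le> cs ! (j-1)" using ss j jn
      using sorted_le[OF ss, of i "j-1"] j by auto
    then show ?thesis using i by simp
  qed
  then show ?thesis using False mem unfolding gw_def Lset_def by auto
qed

lemma gw_card:
  assumes ss: "sorted_wrt (<) cs"
  shows "card {j\<in>{1..length cs}. ereal \<sigma> < gw cs j} = card (Lset (set cs) \<sigma>)"
proof -
  define h where "h j = cs ! (j - 1)" for j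
  have inj: "inj_on h {1..length cs}"
  proof (rule inj_onI)
    fix x y assume xy: "x \<in> {1..length cs}" "y \<in> {1..length cs}" "h x = h y"
    have "distinct cs" using ss by (simp add: strict_sorted_iff)
    moreover have "x - 1 < length cs" "y - 1 < length cs" using xy by auto
    ultimately have "x - 1 = y - 1" using xy(3) unfolding h_def using nth_eq_iff_index_eq by blast
    then show "x = y" using xy(1,2) by presburger
  qed
  have img: "h ` {j\<in>{1..length cs}. ereal \<sigma> < gw cs j} = Lset (set cs) \<sigma>"
  proof
    show "h ` {j\<in>{1..length cs}. ereal \<sigma> < gw cs j} \<subseteq> Lset (set cs) \<sigma>"
      using gw_Lset[OF ss] unfolding h_def by auto
  next
    show "Lset (set cs) \<sigma> \<subseteq> h ` {j\<in>{1..length cs}. ereal \<sigma> < gw cs j}"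
    proof
      fix c assume c: "c \<in> Lset (set cs) \<sigma>"
      then have "c \<in> set cs" unfolding Lset_def by auto
      then obtain i where i: "i < length cs" "c = cs ! i" by (auto simp: in_set_conv_nth)
      have "Suc i \<in> {1..length cs}" using i by auto
      moreover have "h (Suc i) = c" using i unfolding h_def by simp
      moreover have "ereal \<sigma> < gw cs (Suc i)" using gw_Lset[OF ss, of "Suc i" \<sigma>] c i by auto
      ultimately show "c \<in> h ` {j\<in>{1..length cs}. ereal \<sigma> < gw cs j}"
        by (intro rev_image_eqI[of "Suc i"]) auto
    qed
  qed
  have "card (h ` {j\<in>{1..length cs}. ereal \<sigma> < gw cs j}) = card {j\<in>{1..length cs}. ereal \<sigma> < gw cs j}"
    by (rule card_image) (rule inj_on_subset[OF inj], auto)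
  then show ?thesis using img by simp
qed

lemma gw_Min:
  assumes ss: "sorted_wrt (<) cs"
    and ne: "{j\<in>{1..length cs}. ereal \<sigma> < gw cs j} \<noteq> {}"
  shows "cs ! (Min {j\<in>{1..length cs}. ereal \<sigma> < gw cs j} - 1) = Min (Lset (set cs) \<sigma>)"
proof -
  define H where "H = {j\<in>{1..length cs}. ereal \<sigma> < gw cs j}"
  define m where "m = Min H"
  have fH: "finite H" unfolding H_def by auto
  have mH: "m \<in> H" unfolding m_def using fH ne H_def Min_in by blast
  have mle: "\<And>j. j \<in> H \<Longrightarrow> m \<le> j" unfolding m_def using fH by auto
  have fL: "finite (Lset (set cs) \<sigma>)" unfolding Lset_def by auto
  show ?thesis unfolding H_def[symmetric] m_def[symmetric]
  proof (rule Min_eqI[OF fL, symmetric])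
    show "cs ! (m - 1) \<in> Lset (set cs) \<sigma>" using mH gw_Lset[OF ss] unfolding H_def by auto
  next
    fix c assume c: "c \<in> Lset (set cs) \<sigma>"
    then have "c \<in> set cs" unfolding Lset_def by auto
    then obtain i where i: "i < length cs" "c = cs ! i" by (auto simp: in_set_conv_nth)
    have "Suc i \<in> H" using gw_Lset[OF ss, of "Suc i" \<sigma>] c i unfolding H_def by auto
    then have "m - 1 \<le> i" using mle by force
    then show "cs ! (m - 1) \<le> c" using ss i
      using sorted_le[OF ss, of "m-1" i] by auto
  qed
qed

lemma gw_nonneg:
  assumes ss: "sorted_wrt (<) cs" and j: "j \<in> {1..length cs}"
  shows "0 \<le> gw cs j"
proof (cases "j < length cs")
  case True
  have "cs ! (j-1) < cs ! j" using ss True j using sorted_wrt_nth_less[OF ss, of "j-1" j] by auto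
  then show ?thesis using True unfolding gw_def by simp
qed (simp add: gw_def)



definition vwE :: "nat \<Rightarrow> (real \<times> real) multiset \<Rightarrow> ereal" where
  "vwE l E = (if \<exists>j\<in>{1..length (births E)}. vgap_pos E j = l - 1
     then vgap_w E (THE j. j \<in> {1..length (births E)} \<and> vgap_pos E j = l - 1) else 0)"

definition vsE :: "nat \<Rightarrow> (real \<times> real) multiset \<Rightarrow> (real \<times> real) multiset" where
  "vsE l E = (if vgap_top E l = {} then {#}
     else filter_mset (\<lambda>p. fst p \<le> births E ! (Min (vgap_top E l) - 1)) E)"

lemma vgap_width_eq: "vgap_width k l D = vwE l (DS k D)"
  unfolding vgap_width_def vwE_def Let_def by simp

lemma VS_eq: "VS k l D = vsE l (DS k D)"
  unfolding VS_def vsE_def Let_def by simp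

lemma births_ss: "sorted_wrt (<) (births E)"
  unfolding births_def by simp

lemma births_set: "set (births E) = fst ` set_mset E"
  unfolding births_def by simp

lemma vgap_w_gw: "vgap_w E j = gw (births E) j"
  unfolding vgap_w_def gw_def by simp

lemma vgap_beats_gw: "vgap_beats E i j \<longleftrightarrow>
   gw (births E) i > gw (births E) j \<or> (gw (births E) i = gw (births E) j \<and> i < j)"
  unfolding vgap_beats_def vgap_w_gw by simp

lemma vgap_rank_ok: "rank_ok {1..length (births E)} (vgap_beats E)"
  unfolding rank_ok_def vgap_beats_gw
  by (auto simp: linorder_neq_iff)

lemma vgap_pos_rpos: "vgap_pos E j = rpos {1..length (births E)} (vgap_beats E) j"
  unfolding vgap_pos_def rpos_def by simp

lemma vgap_top_rpos: "vgap_top E l = {j\<in>{1..length (births E)}. rpos {1..length (births E)} (vgap_beats E) j < l}"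
  unfolding vgap_top_def vgap_pos_rpos by simp

lemma vwE_eq:
  assumes "j \<in> {1..length (births E)}" "rpos {1..length (births E)} (vgap_beats E) j = l - 1"
  shows "vwE l E = gw (births E) j"
proof -
  note inj = rank_inj[OF vgap_rank_ok[of E]]
  have "(THE j. j \<in> {1..length (births E)} \<and> vgap_pos E j = l - 1) = j"
  proof (rule the_equality)
    show "j \<in> {1..length (births E)} \<and> vgap_pos E j = l - 1" using assms vgap_pos_rpos by simp
  next
    fix j' assume "j' \<in> {1..length (births E)} \<and> vgap_pos E j' = l - 1"
    then show "j' = j" using assms inj_onD[OF inj, of j' j] vgap_pos_rpos by simp
  qed
  then show ?thesis using assms unfolding vwE_def vgap_pos_rpos vgap_w_gw by auto
qed

lemma vwE_none:
  assumes "\<not> (\<exists>j\<in>{1..length (births E)}. rpos {1..length (births E)} (vgap_beats E) j = l - 1)"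
  shows "vwE l E = 0"
  using assms unfolding vwE_def vgap_pos_rpos by auto



lemma comb_main:
  fixes EA EB :: "(real \<times> real) multiset" and \<psi> :: "((real \<times> real) \<times> (real \<times> real)) multiset"
  assumes fA: "image_mset fst \<psi> = EA" and fB: "image_mset snd \<psi> = EB"
    and dst: "\<forall>pq\<in>#\<psi>. dist_inf (fst pq) (snd pq) \<le> \<epsilon>"
    and l1: "l \<ge> 1"
    and hyp: "vwE l EA - vwE (l + 1) EA > ereal (4 * \<epsilon>)"
  shows "image_mset fst (filter_mset (\<lambda>pq. fst pq \<in># vsE l EA) \<psi>) = vsE l EA
       \<and> image_mset snd (filter_mset (\<lambda>pq. fst pq \<in># vsE l EA) \<psi>) = vsE l EB"
proof (cases "\<psi> = {#}")
  case True
  then have "EA = {#}" "EB = {#}" using fA fB by auto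
  then have "vsE l EA = {#}" "vsE l EB = {#}"
    unfolding vsE_def vgap_top_def births_def by auto
  then show ?thesis using True by simp
next
  case False
  then obtain pq0 where pq0: "pq0 \<in># \<psi>" by blast
  have e0: "0 \<le> \<epsilon>" using dst pq0 unfolding dist_inf_def by fastforce
  define csA where "csA = births EA"
  define csB where "csB = births EB"
  define SA where "SA = fst ` set_mset EA"
  define SB where "SB = fst ` set_mset EB"
  define IA where "IA = {1..length csA}"
  define IB where "IB = {1..length csB}"
  define RA where "RA = vgap_beats EA"
  define RB where "RB = vgap_beats EB"
  define pos where "pos = rpos IA RA"
  have ssA: "sorted_wrt (<) csA" unfolding csA_def by (rule births_ss)
  have ssB: "sorted_wrt (<) csB" unfolding csB_def by (rule births_ss)
  have setA: "set csA = SA" unfolding csA_def SA_def by (rule births_set)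
  have setB: "set csB = SB" unfolding csB_def SB_def by (rule births_set)
  have okA: "rank_ok IA RA" unfolding IA_def RA_def csA_def by (rule vgap_rank_ok)
  have okB: "rank_ok IB RB" unfolding IB_def RB_def csB_def by (rule vgap_rank_ok)
  have RA_iff: "RA i j \<longleftrightarrow> gw csA i > gw csA j \<or> (gw csA i = gw csA j \<and> i < j)" for i j
    unfolding RA_def csA_def by (rule vgap_beats_gw)
  have RB_iff: "RB i j \<longleftrightarrow> gw csB i > gw csB j \<or> (gw csB i = gw csB j \<and> i < j)" for i j
    unfolding RB_def csB_def by (rule vgap_beats_gw)
  have finIA: "finite IA" unfolding IA_def by simp
  have rangeA: "pos ` IA = {..<length csA}"
    using rank_range[OF okA] unfolding pos_def IA_def by simp
  have injA: "inj_on pos IA" unfolding pos_def by (rule rank_inj[OF okA])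
  have vwA: "vwE m EA = gw csA j" if "j \<in> IA" "pos j = m - 1" for m j
    using vwE_eq[of j EA m] that unfolding pos_def IA_def RA_def csA_def by simp
  have vwA0: "vwE m EA = 0" if "\<not> (\<exists>j\<in>IA. pos j = m - 1)" for m
    using vwE_none[of EA m] that unfolding pos_def IA_def RA_def csA_def by simp
  have gwA0: "0 \<le> gw csA j" if "j \<in> IA" for j using gw_nonneg[OF ssA] that unfolding IA_def by simp
  have vw_nonneg: "0 \<le> vwE m EA" for m
  proof (cases "\<exists>j\<in>IA. pos j = m - 1")
    case True
    then obtain j where "j \<in> IA" "pos j = m - 1" by blast
    then show ?thesis using vwA gwA0 by simp
  qed (simp add: vwA0)
  have "\<exists>j\<in>IA. pos j = l - 1"
  proof (rule ccontr)
    assume "\<not> (\<exists>j\<in>IA. pos j = l - 1)"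
    then have "vwE l EA = 0" by (rule vwA0)
    then have "vwE l EA - vwE (l + 1) EA \<le> 0" using vw_nonneg[of "l+1"] by simp
    then have "ereal (4 * \<epsilon>) < 0" using hyp by (meson less_le_trans)
    then show False using e0 by simp
  qed
  then obtain jl where jl: "jl \<in> IA" "pos jl = l - 1" by blast
  have W: "vwE l EA = gw csA jl" using vwA jl by simp
  have lle: "l \<le> length csA"
  proof -
    have "pos jl \<in> pos ` IA" using jl(1) by (rule imageI)
    then have "pos jl < length csA" using rangeA by simp
    then show ?thesis using jl(2) l1 by simp
  qed
  have gw_inf: "gw csA j = \<infinity> \<longleftrightarrow> j = length csA" if "j \<in> IA" for j
    using that unfolding gw_def IA_def by auto
  obtain w' where w': "vwE (l + 1) EA = ereal w'" "0 \<le> w'"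
  proof (cases "\<exists>j\<in>IA. pos j = l")
    case True
    then obtain j' where j': "j' \<in> IA" "pos j' = l" by blast
    have W': "vwE (l + 1) EA = gw csA j'" using vwA[of j' "l+1"] j' by simp
    have "j' \<noteq> length csA"
    proof
      assume j'n: "j' = length csA"
      have "pos jl < pos j'" using jl j' l1 by simp
      then have "RA jl j'" using rank_lessD[OF okA jl(1) j'(1)] unfolding pos_def by simp
      then have "gw csA jl = \<infinity>" using gw_inf[OF j'(1)] j'n RA_iff by auto
      then have "jl = j'" using gw_inf[OF jl(1)] j'n by simp
      then show False using jl j' l1 by simp
    qed
    then have "j' < length csA" using j' unfolding IA_def by simp
    then have "gw csA j' = ereal (csA ! j' - csA ! (j' - 1))" unfolding gw_def by simp
    moreover have "0 \<le> csA ! j' - csA ! (j' - 1)" using gwA0[OF j'(1)] calculation by simp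
    ultimately show ?thesis using W' by (intro that[of "csA ! j' - csA ! (j' - 1)"]) simp_all
  next
    case False
    then have "vwE (l + 1) EA = 0" using vwA0[of "l+1"] by simp
    then show ?thesis using that by (simp add: zero_ereal_def)
  qed
  define \<tau> where "\<tau> = w' + 2 * \<epsilon>"
  have t2: "2 * \<epsilon> \<le> \<tau>" using w' unfolding \<tau>_def by simp
  have Wbig: "gw csA jl > ereal (\<tau> + 2 * \<epsilon>)"
  proof -
    have "gw csA jl - ereal w' > ereal (4 * \<epsilon>)" using hyp W w' by simp
    then show ?thesis unfolding \<tau>_def
      by (cases "gw csA jl") (auto simp: algebra_simps)
  qed
  have top: "gw csA j > ereal (\<tau> + 2 * \<epsilon>)" if "j \<in> IA" "pos j < l" for j
  proof (cases "j = jl")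
    case True then show ?thesis using Wbig by simp
  next
    case False
    then have "pos j \<noteq> pos jl" using injA that jl inj_onD by metis
    then have "pos j < pos jl" using that jl by simp
    then have "RA j jl" using rank_lessD[OF okA that(1) jl(1)] unfolding pos_def by simp
    then have "gw csA j \<ge> gw csA jl" using RA_iff by auto
    then show ?thesis using Wbig by simp
  qed
  have nontop: "gw csA j \<le> ereal (\<tau> - 2 * \<epsilon>)" if "j \<in> IA" "\<not> pos j < l" for j
  proof -
    have "pos j < length csA" using rangeA that by blast
    then have "l < length csA" using that by simp
    then have "l \<in> pos ` IA" using rangeA by simp
    then obtain j' where j': "j' \<in> IA" "pos j' = l" by auto
    have "vwE (l + 1) EA = gw csA j'" using vwA[of j' "l+1"] j' by simp
    then have gj': "gw csA j' = ereal w'" using w' by simp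
    have "gw csA j \<le> gw csA j'"
    proof (cases "j = j'")
      case False
      then have "pos j' \<noteq> pos j" using injA that j' inj_onD by metis
      then have "pos j' < pos j" using that j' by simp
      then have "RA j' j" using rank_lessD[OF okA j'(1) that(1)] unfolding pos_def by simp
      then show ?thesis using RA_iff by auto
    qed simp
    then show ?thesis using gj' unfolding \<tau>_def by simp
  qed
  have TA: "vgap_top EA l = {j\<in>IA. gw csA j > ereal \<tau>}"
  proof -
    have "vgap_top EA l = {j\<in>IA. pos j < l}"
      unfolding vgap_top_rpos pos_def IA_def RA_def csA_def by simp
    also have "\<dots> = {j\<in>IA. gw csA j > ereal \<tau>}"
    proof (intro Collect_cong conj_cong refl)
      fix j assume j: "j \<in> IA"
      show "pos j < l \<longleftrightarrow> gw csA j > ereal \<tau>"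
      proof
        assume "pos j < l"
        then have "gw csA j > ereal (\<tau> + 2 * \<epsilon>)" using top j by simp
        moreover have "ereal \<tau> \<le> ereal (\<tau> + 2 * \<epsilon>)" using e0 by simp
        ultimately show "gw csA j > ereal \<tau>" by (meson le_less_trans)
      next
        assume g: "gw csA j > ereal \<tau>"
        show "pos j < l"
        proof (rule ccontr)
          assume "\<not> pos j < l"
          then have "gw csA j \<le> ereal (\<tau> - 2 * \<epsilon>)" using nontop j by simp
          moreover have "ereal (\<tau> - 2 * \<epsilon>) \<le> ereal \<tau>" using e0 by simp
          ultimately have "gw csA j \<le> ereal \<tau>" by (rule order_trans)
          then show False using g by simp
        qed
      qed
    qed
    finally show ?thesis .
  qed
  have cardTA: "card (vgap_top EA l) = l"
  proof -
    have T: "vgap_top EA l = {j\<in>IA. pos j < l}"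
      unfolding vgap_top_rpos pos_def IA_def RA_def csA_def by simp
    have "pos ` {j\<in>IA. pos j < l} = {..<l}"
    proof
      show "pos ` {j\<in>IA. pos j < l} \<subseteq> {..<l}" by auto
    next
      show "{..<l} \<subseteq> pos ` {j\<in>IA. pos j < l}"
      proof
        fix x assume x: "x \<in> {..<l}"
        then have "x \<in> pos ` IA" using rangeA lle by auto
        then obtain j where "j \<in> IA" "x = pos j" by auto
        then show "x \<in> pos ` {j\<in>IA. pos j < l}" using x by auto
      qed
    qed
    moreover have "card (pos ` {j\<in>IA. pos j < l}) = card {j\<in>IA. pos j < l}"
      by (rule card_image) (rule inj_on_subset[OF injA], auto)
    ultimately show ?thesis using T by simp
  qed
  have cardLA: "card (Lset SA \<tau>) = l"
    using cardTA gw_card[OF ssA, of \<tau>] unfolding TA IA_def setA by simp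
  have G: "\<forall>c. c \<in> Lset SA (\<tau> - 2 * \<epsilon>) \<longrightarrow> c \<in> Lset SA (\<tau> + 2 * \<epsilon>)"
  proof (intro allI impI)
    fix c assume c: "c \<in> Lset SA (\<tau> - 2 * \<epsilon>)"
    then have "c \<in> set csA" using setA unfolding Lset_def by auto
    then obtain i where i: "i < length csA" "c = csA ! i" by (metis in_set_conv_nth)
    have j: "Suc i \<in> IA" using i unfolding IA_def by simp
    have "ereal (\<tau> - 2 * \<epsilon>) < gw csA (Suc i)"
      using gw_Lset[OF ssA, of "Suc i" "\<tau> - 2 * \<epsilon>"] j c i setA unfolding IA_def by simp
    then have "\<not> pos (Suc i) >= l \<or> False" using nontop[OF j] by force
    then have "ereal (\<tau> + 2 * \<epsilon>) < gw csA (Suc i)" using top[OF j] by simp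
    then show "c \<in> Lset SA (\<tau> + 2 * \<epsilon>)"
      using gw_Lset[OF ssA, of "Suc i" "\<tau> + 2 * \<epsilon>"] j i setA unfolding IA_def by simp
  qed
  have pAB: "\<forall>a\<in>SA. \<exists>b\<in>SB. \<bar>a - b\<bar> \<le> \<epsilon>"
  proof
    fix a assume "a \<in> SA"
    then obtain p where p: "p \<in># EA" "a = fst p" unfolding SA_def by auto
    then obtain pq where pq: "pq \<in># \<psi>" "fst pq = p" using fA by auto
    have "snd pq \<in># EB" using pq fB by auto
    then have "fst (snd pq) \<in> SB" unfolding SB_def by auto
    moreover have "\<bar>a - fst (snd pq)\<bar> \<le> \<epsilon>" using dst pq p unfolding dist_inf_def by fastforce
    ultimately show "\<exists>b\<in>SB. \<bar>a - b\<bar> \<le> \<epsilon>" by blast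
  qed
  have pBA: "\<forall>b\<in>SB. \<exists>a\<in>SA. \<bar>a - b\<bar> \<le> \<epsilon>"
  proof
    fix b assume "b \<in> SB"
    then obtain p where p: "p \<in># EB" "b = fst p" unfolding SB_def by auto
    then obtain pq where pq: "pq \<in># \<psi>" "snd pq = p" using fB by auto
    have "fst pq \<in># EA" using pq fA by auto
    then have "fst (fst pq) \<in> SA" unfolding SA_def by auto
    moreover have "\<bar>fst (fst pq) - b\<bar> \<le> \<epsilon>" using dst pq p unfolding dist_inf_def by fastforce
    ultimately show "\<exists>a\<in>SA. \<bar>a - b\<bar> \<le> \<epsilon>" by blast
  qed
  have finSA: "finite SA" unfolding SA_def by simp
  have finSB: "finite SB" unfolding SB_def by simp
  note LM = Lset_match[OF finSA finSB pAB pBA G e0 t2]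
  have cardLB: "card (Lset SB \<tau>) = l" using LM(1) cardLA by simp
  have TB: "vgap_top EB l = {j\<in>IB. gw csB j > ereal \<tau>}"
  proof -
    have "vgap_top EB l = {j\<in>IB. rpos IB RB j < l}"
      unfolding vgap_top_rpos IB_def RB_def csB_def by simp
    also have "\<dots> = {j\<in>IB. gw csB j > ereal \<tau>}"
    proof (rule rank_top_eq[OF okB])
      show "card {j\<in>IB. gw csB j > ereal \<tau>} = l"
        using gw_card[OF ssB, of \<tau>] cardLB setB unfolding IB_def by simp
    next
      fix i j assume "RB i j" "ereal \<tau> < gw csB j"
      then show "ereal \<tau> < gw csB i" using RB_iff by auto
    next
      fix i j assume "ereal \<tau> < gw csB i" "\<not> ereal \<tau> < gw csB j"
      then show "RB i j" using RB_iff by auto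
    qed
    finally show ?thesis .
  qed
  have neLA: "Lset SA \<tau> \<noteq> {}" using cardLA l1 by auto
  have neTA: "{j\<in>IA. gw csA j > ereal \<tau>} \<noteq> {}"
  proof
    assume "{j\<in>IA. gw csA j > ereal \<tau>} = {}"
    then have "card (vgap_top EA l) = 0" using TA by (metis card.empty)
    then show False using cardTA l1 by simp
  qed
  have neTB: "{j\<in>IB. gw csB j > ereal \<tau>} \<noteq> {}"
  proof
    assume "{j\<in>IB. gw csB j > ereal \<tau>} = {}"
    then have "card {j\<in>IB. gw csB j > ereal \<tau>} = 0" by (metis card.empty)
    moreover have "card {j\<in>IB. gw csB j > ereal \<tau>} = l"
      using gw_card[OF ssB, of \<tau>] cardLB setB unfolding IB_def by simp
    ultimately show False using l1 by simp
  qed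
  define \<alpha> where "\<alpha> = Min (Lset SA \<tau>)"
  define \<beta> where "\<beta> = Min (Lset SB \<tau>)"
  have vsA: "vsE l EA = filter_mset (\<lambda>p. fst p \<le> \<alpha>) EA"
  proof -
    have "csA ! (Min (vgap_top EA l) - 1) = \<alpha>"
      unfolding TA \<alpha>_def IA_def using gw_Min[OF ssA] neTA setA unfolding IA_def by simp
    moreover have ne: "vgap_top EA l \<noteq> {}" using neTA TA by simp
    ultimately show ?thesis unfolding vsE_def csA_def by (simp only: ne if_False)
  qed
  have vsB: "vsE l EB = filter_mset (\<lambda>p. fst p \<le> \<beta>) EB"
  proof -
    have "csB ! (Min (vgap_top EB l) - 1) = \<beta>"
      unfolding TB \<beta>_def IB_def using gw_Min[OF ssB] neTB setB unfolding IB_def by simp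
    moreover have ne: "vgap_top EB l \<noteq> {}" using neTB TB by simp
    ultimately show ?thesis unfolding vsE_def csB_def by (simp only: ne if_False)
  qed
  have key: "fst (fst pq) \<le> \<alpha> \<longleftrightarrow> fst (snd pq) \<le> \<beta>" if pq: "pq \<in># \<psi>" for pq
  proof -
    have "fst pq \<in># EA" using pq fA by auto
    then have a: "fst (fst pq) \<in> SA" unfolding SA_def by auto
    have "snd pq \<in># EB" using pq fB by auto
    then have b: "fst (snd pq) \<in> SB" unfolding SB_def by auto
    have "\<bar>fst (fst pq) - fst (snd pq)\<bar> \<le> \<epsilon>" using dst pq unfolding dist_inf_def by fastforce
    then show ?thesis using LM(2)[OF neLA a b] unfolding \<alpha>_def \<beta>_def by simp
  qed
  have memA: "fst pq \<in># vsE l EA \<longleftrightarrow> fst (fst pq) \<le> \<alpha>" if pq: "pq \<in># \<psi>" for pq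
  proof -
    have "fst pq \<in># EA" using pq fA by auto
    then show ?thesis unfolding vsA by simp
  qed
  have F1: "filter_mset (\<lambda>pq. fst pq \<in># vsE l EA) \<psi> = filter_mset (\<lambda>pq. fst (fst pq) \<le> \<alpha>) \<psi>"
    by (rule filter_mset_cong) (use memA in auto)
  have F2: "filter_mset (\<lambda>pq. fst pq \<in># vsE l EA) \<psi> = filter_mset (\<lambda>pq. fst (snd pq) \<le> \<beta>) \<psi>"
    by (rule filter_mset_cong) (use memA key in auto)
  have "image_mset fst (filter_mset (\<lambda>pq. fst (fst pq) \<le> \<alpha>) \<psi>) = filter_mset (\<lambda>p. fst p \<le> \<alpha>) (image_mset fst \<psi>)"
    by (rule image_mset_filter_mset_swap)
  moreover have "image_mset snd (filter_mset (\<lambda>pq. fst (snd pq) \<le> \<beta>) \<psi>) = filter_mset (\<lambda>p. fst p \<le> \<beta>) (image_mset snd \<psi>)"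
    by (rule image_mset_filter_mset_swap)
  ultimately show ?thesis using F1 F2 vsA vsB fA fB by simp
qed


theorem mainTheorem13:
  fixes G C :: "'a::euclidean_space set"
    and \<epsilon> :: real and k l :: nat
    and \<psi> :: "((real \<times> real) \<times> (real \<times> real)) multiset"
  assumes "compact_graph G"
    and "finite C" and "eps_sample C G \<epsilon>"
    and "k \<ge> 1"
    and "image_mset fst \<psi> = DS k (PD G)" and "image_mset snd \<psi> = DS k (PD C)"
    and "\<forall>pq\<in>#\<psi>. dist_inf (fst pq) (snd pq) \<le> \<epsilon>"
    and "l \<ge> 1"
    and "vgap_width k l (PD G) - vgap_width k (l + 1) (PD G) > ereal (4 * \<epsilon>)"
  shows "image_mset fst (filter_mset (\<lambda>pq. fst pq \<in># VS k l (PD G)) \<psi>) = VS k l (PD G)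
       \<and> image_mset snd (filter_mset (\<lambda>pq. fst pq \<in># VS k l (PD G)) \<psi>) = VS k l (PD C)"
  proof -
  have h: "vwE l (DS k (PD G)) - vwE (l + 1) (DS k (PD G)) > ereal (4 * \<epsilon>)"
    using assms(9) unfolding vgap_width_eq .
  show ?thesis unfolding VS_eq
    by (rule comb_main[OF assms(5) assms(6) assms(7) assms(8) h])
qed

end
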